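(* Let $\mathcal T_p$ be a Tarski monster, $X$ a finite generating system of $\mathcal T_p$, $\mathcal K$ a proper non-trivial subgroup and $\Gamma=\mathrm{Sch}(\mathcal T_p,\mathcal K,X)$. Then the group $\mathrm{Aut}_X(\Gamma)$ of label-preserving automorphisms of $\Gamma$ is trivial and each orbit of $\mathrm{Aut}(\Gamma)$ on vertices is finite. In particular, $\Gamma$ is not almost transitive, and Tarski monsters are strongly simple.
   Context: For a prime $p$, a Tarski monster $\mathcal T_p$ is an infinite group every proper non-trivial subgroup of which is cyclic of order $p$. The Schreier graph $\mathrm{Sch}(\mathcal A,\mathcal K,X)$ has vertices the right cosets $\mathcal Kg$ and, for each coset and each $x$ with $x\in X$ or $x^{-1}\in X$, an edge labeled $x$ from $\mathcal Kg$ to $\mathcal Kgx$ whose inverse is the edge labeled $x^{-1}$ from $\mathcal Kgx$. $\mathrm{Aut}(\Gamma)$ is the group of all graph automorphisms (ignoring labels). A graph is almost transitive if there is a finite set $V_0$ of vertices such that every vertex can be mapped into $V_0$ by an automorphism. A finitely generated group $\mathcal A$ is strongly simple if for every generating system $X$ of size at most $\mathrm{rank}(\mathcal A)+1$ (rank = minimal number of generators) and every proper non-trivial subgroup $\mathcal H$, $\mathrm{Sch}(\mathcal A,\mathcal H,X)$ is not vertex-transitive. *)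

theory Defs
  imports "HOL-Algebra.Coset" "HOL-Algebra.Generated_Groups" "HOL-Computational_Algebra.Primes"
begin

definition tarski_monster :: "('a, 'b) monoid_scheme \<Rightarrow> nat \<Rightarrow> bool" where
  "tarski_monster G p \<longleftrightarrow> group G \<and> Factorial_Ring.prime p \<and> infinite (carrier G) \<and>
     (\<forall>H. subgroup H G \<and> H \<noteq> {\<one>\<^bsub>G\<^esub>} \<and> H \<noteq> carrier G \<longrightarrow>
        card H = p \<and> (\<exists>g\<in>carrier G. H = generate G {g}))"

definition gen_system :: "('a, 'b) monoid_scheme \<Rightarrow> 'a set \<Rightarrow> bool" where
  "gen_system G X \<longleftrightarrow> X \<subseteq> carrier G \<and> generate G X = carrier G"

definition fin_generated :: "('a, 'b) monoid_scheme \<Rightarrow> bool" where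
  "fin_generated G \<longleftrightarrow> (\<exists>X. finite X \<and> gen_system G X)"

definition group_rank :: "('a, 'b) monoid_scheme \<Rightarrow> nat" where
  "group_rank G = (LEAST n. \<exists>X. finite X \<and> gen_system G X \<and> card X = n)"

(* Edges: pairs (C, x), C a vertex, x a label; the edge (C,x) goes from C to C x,
   carries label x, and its inverse edge is (C x, x^{-1}). *)
definition sch_V :: "('a, 'b) monoid_scheme \<Rightarrow> 'a set \<Rightarrow> 'a set set" where
  "sch_V G K = rcosets\<^bsub>G\<^esub> K"

definition sch_labels :: "('a, 'b) monoid_scheme \<Rightarrow> 'a set \<Rightarrow> 'a set" where
  "sch_labels G X = {x \<in> carrier G. x \<in> X \<or> inv\<^bsub>G\<^esub> x \<in> X}"

definition sch_E :: "('a, 'b) monoid_scheme \<Rightarrow> 'a set \<Rightarrow> 'a set \<Rightarrow> ('a set \<times> 'a) set" where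
  "sch_E G K X = sch_V G K \<times> sch_labels G X"

definition sch_orig :: "'a set \<times> 'a \<Rightarrow> 'a set" where
  "sch_orig e = fst e"

definition sch_term :: "('a, 'b) monoid_scheme \<Rightarrow> 'a set \<times> 'a \<Rightarrow> 'a set" where
  "sch_term G e = fst e #>\<^bsub>G\<^esub> snd e"

definition sch_rev :: "('a, 'b) monoid_scheme \<Rightarrow> 'a set \<times> 'a \<Rightarrow> 'a set \<times> 'a" where
  "sch_rev G e = (fst e #>\<^bsub>G\<^esub> snd e, inv\<^bsub>G\<^esub> snd e)"

definition sch_label :: "'a set \<times> 'a \<Rightarrow> 'a" where
  "sch_label e = snd e"

(* Aut(Sch): all graph automorphisms (labels ignored): a bijection f of the
   vertices and a bijection h of the edges compatible with origin and with
   edge inversion (hence also with terminus). *)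
definition sch_aut :: "('a, 'b) monoid_scheme \<Rightarrow> 'a set \<Rightarrow> 'a set \<Rightarrow>
    (('a set \<Rightarrow> 'a set) \<times> ('a set \<times> 'a \<Rightarrow> 'a set \<times> 'a)) set" where
  "sch_aut G K X = {(f, h). bij_betw f (sch_V G K) (sch_V G K) \<and>
      bij_betw h (sch_E G K X) (sch_E G K X) \<and>
      (\<forall>e\<in>sch_E G K X. sch_orig (h e) = f (sch_orig e) \<and>
                        sch_rev G (h e) = h (sch_rev G e))}"

definition sch_aut_lab :: "('a, 'b) monoid_scheme \<Rightarrow> 'a set \<Rightarrow> 'a set \<Rightarrow>
    (('a set \<Rightarrow> 'a set) \<times> ('a set \<times> 'a \<Rightarrow> 'a set \<times> 'a)) set" where
  "sch_aut_lab G K X = {(f, h) \<in> sch_aut G K X.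
      \<forall>e\<in>sch_E G K X. sch_label (h e) = sch_label e}"

definition sch_orbit :: "('a, 'b) monoid_scheme \<Rightarrow> 'a set \<Rightarrow> 'a set \<Rightarrow> 'a set \<Rightarrow> 'a set set" where
  "sch_orbit G K X v = {f v | f h. (f, h) \<in> sch_aut G K X}"

definition sch_vertex_transitive :: "('a, 'b) monoid_scheme \<Rightarrow> 'a set \<Rightarrow> 'a set \<Rightarrow> bool" where
  "sch_vertex_transitive G K X \<longleftrightarrow>
     (\<forall>v\<in>sch_V G K. \<forall>w\<in>sch_V G K. \<exists>(f, h)\<in>sch_aut G K X. f v = w)"

definition sch_almost_transitive :: "('a, 'b) monoid_scheme \<Rightarrow> 'a set \<Rightarrow> 'a set \<Rightarrow> bool" where
  "sch_almost_transitive G K X \<longleftrightarrow>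
     (\<exists>V0. finite V0 \<and> V0 \<subseteq> sch_V G K \<and>
        (\<forall>v\<in>sch_V G K. \<exists>(f, h)\<in>sch_aut G K X. f v \<in> V0))"

definition strongly_simple :: "('a, 'b) monoid_scheme \<Rightarrow> bool" where
  "strongly_simple G \<longleftrightarrow> fin_generated G \<and>
     (\<forall>X H. finite X \<and> gen_system G X \<and> card X \<le> group_rank G + 1 \<and>
        subgroup H G \<and> H \<noteq> {\<one>\<^bsub>G\<^esub>} \<and> H \<noteq> carrier G \<longrightarrow>
        \<not> sch_vertex_transitive G H X)"

end

theory Submission
  imports Defs "HOL-Algebra.Multiplicative_Group"
begin


lemma (in group) cancel_l1 [simp]: "x \<in> carrier G \<Longrightarrow> y \<in> carrier G \<Longrightarrow> inv x \<otimes> (x \<otimes> y) = y"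
  by (simp add: m_assoc[symmetric])
lemma (in group) cancel_l2 [simp]: "x \<in> carrier G \<Longrightarrow> y \<in> carrier G \<Longrightarrow> x \<otimes> (inv x \<otimes> y) = y"
  by (simp add: m_assoc[symmetric])

lemma tm_basic:
  assumes "tarski_monster G p"
  shows "group G" "infinite (carrier G)" "p > 0"
    "\<And>H. subgroup H G \<Longrightarrow> H \<noteq> {\<one>\<^bsub>G\<^esub>} \<Longrightarrow> H \<noteq> carrier G \<Longrightarrow> card H = p \<and> finite H"
  using assms unfolding tarski_monster_def
  by (auto simp: prime_gt_0_nat dest: card_ge_0_finite)

lemma (in group) tm_not_normal:
  assumes tm: "tarski_monster G p" and K: "subgroup K G" "K \<noteq> {\<one>}" "K \<noteq> carrier G"
  and nrm: "\<forall>t\<in>carrier G. \<forall>k\<in>K. t \<otimes> k \<otimes> inv t \<in> K"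
  shows False
proof -
  note tb = tm_basic[OF tm]
  have Kc: "K \<subseteq> carrier G" using K(1) subgroup.subset by blast
  have finK: "finite K" "card K = p" using tb(4)[OF K] by auto
  obtain a where a: "a \<in> carrier G" "a \<notin> K" using Kc K(3) by blast
  define A where "A = generate G {a}"
  have Asub: "subgroup A G" unfolding A_def using a by (simp add: generate_is_subgroup)
  have aA: "a \<in> A" unfolding A_def by (simp add: generate.incl)
  have one_K: "\<one> \<in> K" using K(1) subgroup.one_closed by blast
  have finA: "finite A"
  proof (cases "A = carrier G")
    case False
    have "A \<noteq> {\<one>}" using aA a one_K by auto
    then show ?thesis using tb(4)[OF Asub _ False] by auto
  next
    case True
    obtain k where k: "k \<in> K" "k \<noteq> \<one>" using K(2) one_K by blast
    have kc: "k \<in> carrier G" using k Kc by blast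
    have "generate G {k} \<subseteq> K" using k K(1) generate_subgroup_incl by blast
    then have "finite (generate G {k})" using finK finite_subset by blast
    then have "finite (carrier (subgroup_generated G {k}))"
      using kc by (simp add: carrier_subgroup_generated)
    then obtain i :: int where i: "i \<noteq> 0" "k [^] i = \<one>"
      using finite_cyclic_subgroup_int[OF kc] by blast
    have "k \<in> A" using True kc by simp
    then obtain j :: int where j: "k = a [^] j" unfolding A_def generate_pow[OF a(1)] by blast
    have "j \<noteq> 0" using j k(2) by auto
    have "a [^] (j * i) = \<one>" using i j a(1) by (simp add: int_pow_pow)
    moreover have "j * i \<noteq> 0" using \<open>j \<noteq> 0\<close> i by simp
    ultimately have "finite (carrier (subgroup_generated G {a}))"
      using finite_cyclic_subgroup_int[OF a(1)] by blast
    then show ?thesis using a by (simp add: carrier_subgroup_generated A_def)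
  qed
  have Ac: "A \<subseteq> carrier G" using Asub subgroup.subset by blast
  define M where "M = {x \<otimes> k | x k. x \<in> A \<and> k \<in> K}"
  have Mc: "M \<subseteq> carrier G" unfolding M_def using Ac Kc by blast
  have Msub: "subgroup M G"
  proof (rule subgroupI)
    show "M \<subseteq> carrier G" by (fact Mc)
    show "M \<noteq> {}" unfolding M_def using aA one_K by blast
  next
    fix m assume "m \<in> M"
    then obtain x k where xk: "x \<in> A" "k \<in> K" "m = x \<otimes> k" unfolding M_def by blast
    have xc: "x \<in> carrier G" and kc: "k \<in> carrier G" using xk Ac Kc by auto
    have "inv k \<in> K" using xk(2) K(1) by (simp add: subgroup.m_inv_closed)
    then have "x \<otimes> inv k \<otimes> inv x \<in> K" using nrm xc by blast
    moreover have "inv m = inv x \<otimes> (x \<otimes> inv k \<otimes> inv x)"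
    proof -
      have "inv x \<otimes> (x \<otimes> inv k \<otimes> inv x) = inv k \<otimes> inv x" using xc kc by (simp add: m_assoc)
      moreover have "inv m = inv k \<otimes> inv x" unfolding xk(3) by (rule inv_mult_group[OF xc kc])
      ultimately show ?thesis by metis
    qed
    moreover have "inv x \<in> A" by (rule subgroup.m_inv_closed[OF Asub xk(1)])
    ultimately show "inv m \<in> M" unfolding M_def by (intro CollectI exI conjI)
  next
    fix m n assume "m \<in> M" "n \<in> M"
    then obtain x k y l where xk: "x \<in> A" "k \<in> K" "m = x \<otimes> k" "y \<in> A" "l \<in> K" "n = y \<otimes> l"
      unfolding M_def by blast
    have c: "x \<in> carrier G" "k \<in> carrier G" "y \<in> carrier G" "l \<in> carrier G" using xk Ac Kc by auto
    have "inv y \<otimes> k \<otimes> inv (inv y) \<in> K" using nrm c(3) xk(2) by (meson inv_closed)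
    then have k': "inv y \<otimes> k \<otimes> y \<in> K" using c by simp
    have "m \<otimes> n = (x \<otimes> y) \<otimes> ((inv y \<otimes> k \<otimes> y) \<otimes> l)"
      using c by (simp add: xk(3,6) m_assoc)
    moreover have "x \<otimes> y \<in> A" by (rule subgroup.m_closed[OF Asub xk(1,4)])
    moreover have "(inv y \<otimes> k \<otimes> y) \<otimes> l \<in> K" by (rule subgroup.m_closed[OF K(1) k' xk(5)])
    ultimately show "m \<otimes> n \<in> M" unfolding M_def by (intro CollectI exI conjI)
  qed
  have "M = (\<lambda>(x,k). x \<otimes> k) ` (A \<times> K)" unfolding M_def by auto
  then have finM: "finite M" using finA finK by simp
  have oneA: "\<one> \<in> A" by (rule subgroup.one_closed[OF Asub])
  have KM: "K \<subseteq> M"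
  proof
    fix k assume k: "k \<in> K"
    then have "k = \<one> \<otimes> k" using Kc by auto
    then show "k \<in> M" unfolding M_def using oneA k by (intro CollectI exI conjI)
  qed
  have "a = a \<otimes> \<one>" using a by simp
  then have aM: "a \<in> M" unfolding M_def using aA one_K by (intro CollectI exI conjI)
  have "M \<noteq> carrier G" using finM tb(2) by auto
  moreover have "M \<noteq> {\<one>}" using KM K(2) one_K by blast
  ultimately have "card M = p" using tb(4)[OF Msub] by auto
  then have "K = M" using card_subset_eq[OF finM KM] finK by simp
  then show False using aM a by simp
qed

lemma (in group) tm_self_norm:
  assumes tm: "tarski_monster G p" and K: "subgroup K G" "K \<noteq> {\<one>}" "K \<noteq> carrier G"
  and t: "t \<in> carrier G" and tK: "\<forall>k\<in>K. t \<otimes> k \<otimes> inv t \<in> K"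
  shows "t \<in> K"
proof -
  note tb = tm_basic[OF tm]
  have Kc: "K \<subseteq> carrier G" using K(1) subgroup.subset by blast
  have finK: "finite K" "card K = p" using tb(4)[OF K] by auto
  define N where "N = {s \<in> carrier G. \<forall>k\<in>K. s \<otimes> k \<otimes> inv s \<in> K \<and> inv s \<otimes> k \<otimes> s \<in> K}"
  define \<phi> where "\<phi> = (\<lambda>k. t \<otimes> k \<otimes> inv t)"
  have inj: "inj_on \<phi> K"
  proof (rule inj_onI)
    fix x y assume xy: "x \<in> K" "y \<in> K" "\<phi> x = \<phi> y"
    have xc: "x \<in> carrier G" "y \<in> carrier G" using xy Kc by auto
    have "inv t \<otimes> (\<phi> x \<otimes> t) = inv t \<otimes> (\<phi> y \<otimes> t)" using xy(3) by simp
    then show "x = y" using xc t by (simp add: \<phi>_def m_assoc)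
  qed
  have "\<phi> ` K \<subseteq> K" using tK \<phi>_def by auto
  moreover have "card (\<phi> ` K) = card K" using card_image[OF inj] .
  ultimately have img: "\<phi> ` K = K" using card_subset_eq[OF finK(1)] by metis
  have tN: "t \<in> N"
    unfolding N_def
  proof (intro CollectI conjI ballI t)
    fix k assume k: "k \<in> K"
    show "t \<otimes> k \<otimes> inv t \<in> K" using tK k by blast
    from k img obtain k' where k': "k' \<in> K" "k = \<phi> k'" by (metis imageE)
    have "k' \<in> carrier G" using k' Kc by auto
    then have "inv t \<otimes> k \<otimes> t = k'" using t by (simp add: k'(2) \<phi>_def m_assoc)
    then show "inv t \<otimes> k \<otimes> t \<in> K" using k' by simp
  qed
  have Nsub: "subgroup N G"
  proof (rule subgroupI)
    show "N \<subseteq> carrier G" unfolding N_def by blast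
    show "N \<noteq> {}" using tN by blast
  next
    fix a assume a: "a \<in> N"
    then have ac: "a \<in> carrier G" unfolding N_def by blast
    show "inv a \<in> N" unfolding N_def
    proof (intro CollectI conjI ballI)
      show "inv a \<in> carrier G" using ac by simp
      fix k assume k: "k \<in> K"
      have "inv a \<otimes> k \<otimes> a \<in> K" using a k unfolding N_def by blast
      then show "inv a \<otimes> k \<otimes> inv (inv a) \<in> K" using ac by simp
      have "a \<otimes> k \<otimes> inv a \<in> K" using a k unfolding N_def by blast
      then show "inv (inv a) \<otimes> k \<otimes> inv a \<in> K" using ac by simp
    qed
  next
    fix a b assume a: "a \<in> N" and b: "b \<in> N"
    then have ac: "a \<in> carrier G" and bc: "b \<in> carrier G" unfolding N_def by blast+
    show "a \<otimes> b \<in> N" unfolding N_def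
    proof (intro CollectI conjI ballI)
      show "a \<otimes> b \<in> carrier G" using ac bc by simp
      fix k assume k: "k \<in> K"
      have kc: "k \<in> carrier G" using k Kc by auto
      have "b \<otimes> k \<otimes> inv b \<in> K" using b k unfolding N_def by blast
      then have "a \<otimes> (b \<otimes> k \<otimes> inv b) \<otimes> inv a \<in> K" using a unfolding N_def by blast
      moreover have "a \<otimes> (b \<otimes> k \<otimes> inv b) \<otimes> inv a = a \<otimes> b \<otimes> k \<otimes> inv (a \<otimes> b)"
        using ac bc kc by (simp add: m_assoc inv_mult_group)
      ultimately show "a \<otimes> b \<otimes> k \<otimes> inv (a \<otimes> b) \<in> K" by simp
      have "inv a \<otimes> k \<otimes> a \<in> K" using a k unfolding N_def by blast
      then have "inv b \<otimes> (inv a \<otimes> k \<otimes> a) \<otimes> b \<in> K" using b unfolding N_def by blast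
      moreover have "inv b \<otimes> (inv a \<otimes> k \<otimes> a) \<otimes> b = inv (a \<otimes> b) \<otimes> k \<otimes> (a \<otimes> b)"
        using ac bc kc by (simp add: m_assoc inv_mult_group)
      ultimately show "inv (a \<otimes> b) \<otimes> k \<otimes> (a \<otimes> b) \<in> K" by simp
    qed
  qed
  have KN: "K \<subseteq> N"
  proof
    fix a assume a: "a \<in> K"
    have ac: "a \<in> carrier G" using a Kc by auto
    show "a \<in> N" unfolding N_def
    proof (intro CollectI conjI ballI ac)
      fix k assume k: "k \<in> K"
      show "a \<otimes> k \<otimes> inv a \<in> K"
        by (intro subgroup.m_closed[OF K(1)] subgroup.m_inv_closed[OF K(1)] a k)
      show "inv a \<otimes> k \<otimes> a \<in> K"
        by (intro subgroup.m_closed[OF K(1)] subgroup.m_inv_closed[OF K(1)] a k)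
    qed
  qed
  show "t \<in> K"
  proof (cases "N = carrier G")
    case True
    have "\<forall>s\<in>carrier G. \<forall>k\<in>K. s \<otimes> k \<otimes> inv s \<in> K" using True unfolding N_def by blast
    then show ?thesis using tm_not_normal[OF tm K] by blast
  next
    case False
    have "N \<noteq> {\<one>}" using KN K(2) subgroup.one_closed[OF K(1)] by blast
    then have "card N = p" "finite N" using tb(4)[OF Nsub _ False] by auto
    then have "K = N" using card_subset_eq[OF _ KN] finK by simp
    then show ?thesis using tN by simp
  qed
qed

lemma (in group) tm_unique:
  assumes tm: "tarski_monster G p" and K: "subgroup K G" "K \<noteq> {\<one>}" "K \<noteq> carrier G"
  and g: "g1 \<in> carrier G" "g2 \<in> carrier G" and c: "c \<in> carrier G" "c \<noteq> \<one>"
  and in1: "g1 \<otimes> c \<otimes> inv g1 \<in> K" and in2: "g2 \<otimes> c \<otimes> inv g2 \<in> K"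
  shows "K #> g1 = K #> g2"
proof -
  note tb = tm_basic[OF tm]
  have Kc: "K \<subseteq> carrier G" using K(1) subgroup.subset by blast
  have finK: "finite K" "card K = p" using tb(4)[OF K] by auto
  define t where "t = g2 \<otimes> inv g1"
  have tc: "t \<in> carrier G" using g t_def by simp
  define H where "H = {k \<in> K. t \<otimes> k \<otimes> inv t \<in> K}"
  define u where "u = g1 \<otimes> c \<otimes> inv g1"
  have "t \<otimes> u \<otimes> inv t = g2 \<otimes> c \<otimes> inv g2"
    using g c by (simp add: t_def u_def m_assoc inv_mult_group)
  then have uH: "u \<in> H" unfolding H_def using in1 in2 u_def by simp
  have u1: "u \<noteq> \<one>"
  proof
    assume "u = \<one>"
    then have "inv g1 \<otimes> (u \<otimes> g1) = \<one>" using g by simp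
    then show False using g c by (simp add: u_def m_assoc)
  qed
  have Hsub: "subgroup H G"
  proof (rule subgroupI)
    show "H \<subseteq> carrier G" unfolding H_def using Kc by blast
    show "H \<noteq> {}" using uH by blast
  next
    fix a assume a: "a \<in> H"
    then have aK: "a \<in> K" and ta: "t \<otimes> a \<otimes> inv t \<in> K" unfolding H_def by auto
    have ac: "a \<in> carrier G" using aK Kc by auto
    have "inv (t \<otimes> a \<otimes> inv t) \<in> K" by (rule subgroup.m_inv_closed[OF K(1) ta])
    moreover have "inv (t \<otimes> a \<otimes> inv t) = t \<otimes> inv a \<otimes> inv t"
      using ac tc by (simp add: m_assoc inv_mult_group)
    ultimately show "inv a \<in> H" unfolding H_def using subgroup.m_inv_closed[OF K(1) aK] by simp
  next
    fix a b assume a: "a \<in> H" and b: "b \<in> H"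
    then have aK: "a \<in> K" and ta: "t \<otimes> a \<otimes> inv t \<in> K"
      and bK: "b \<in> K" and tb': "t \<otimes> b \<otimes> inv t \<in> K" unfolding H_def by auto
    have ac: "a \<in> carrier G" "b \<in> carrier G" using aK bK Kc by auto
    have "(t \<otimes> a \<otimes> inv t) \<otimes> (t \<otimes> b \<otimes> inv t) \<in> K" by (rule subgroup.m_closed[OF K(1) ta tb'])
    moreover have "(t \<otimes> a \<otimes> inv t) \<otimes> (t \<otimes> b \<otimes> inv t) = t \<otimes> (a \<otimes> b) \<otimes> inv t"
      using ac tc by (simp add: m_assoc)
    ultimately show "a \<otimes> b \<in> H" unfolding H_def using subgroup.m_closed[OF K(1) aK bK] by simp
  qed
  have HK: "H \<subseteq> K" unfolding H_def by blast
  have "H \<noteq> carrier G" using HK K(3) Kc by blast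
  moreover have "H \<noteq> {\<one>}" using uH u1 by blast
  ultimately have "card H = p" using tb(4)[OF Hsub] by auto
  then have "H = K" using card_subset_eq[OF finK(1) HK] finK by simp
  then have "\<forall>k\<in>K. t \<otimes> k \<otimes> inv t \<in> K" unfolding H_def by blast
  then have tK: "t \<in> K" using tm_self_norm[OF tm K tc] by blast
  have "g2 = t \<otimes> g1" using g by (simp add: t_def m_assoc)
  then have "K #> g2 = (K #> t) #> g1" using coset_mult_assoc[OF Kc tc g(1)] by simp
  also have "K #> t = K" by (rule coset_join2[OF tc K(1) tK])
  finally show ?thesis by simp
qed



primrec Wb :: "('a,'b) monoid_scheme \<Rightarrow> 'a set \<Rightarrow> nat \<Rightarrow> 'a set" where
  "Wb G L 0 = {\<one>\<^bsub>G\<^esub>}"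
| "Wb G L (Suc n) = Wb G L n \<union> (\<Union>w\<in>Wb G L n. (\<lambda>x. w \<otimes>\<^bsub>G\<^esub> x) ` L)"

primrec Bl :: "('a,'b) monoid_scheme \<Rightarrow> 'a set \<Rightarrow> 'a set \<Rightarrow> nat \<Rightarrow> 'a set set" where
  "Bl G L v 0 = {v}"
| "Bl G L v (Suc n) = Bl G L v n \<union> (\<Union>u\<in>Bl G L v n. (\<lambda>x. u #>\<^bsub>G\<^esub> x) ` L)"

lemma subsingleton_finite: "(\<And>x y. x \<in> A \<Longrightarrow> y \<in> A \<Longrightarrow> x = y) \<Longrightarrow> finite A"
proof (cases "A = {}")
  case False
  then obtain a where "a \<in> A" by blast
  moreover assume "\<And>x y. x \<in> A \<Longrightarrow> y \<in> A \<Longrightarrow> x = y"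
  ultimately have "A \<subseteq> {a}" by blast
  then show ?thesis using finite_subset by blast
qed simp

context group
begin

lemma Wb_carrier: "L \<subseteq> carrier G \<Longrightarrow> Wb G L n \<subseteq> carrier G"
  by (induction n) auto

lemma Wb_finite: "finite L \<Longrightarrow> finite (Wb G L n)"
  by (induction n) auto

lemma Wb_mono: "m \<le> n \<Longrightarrow> Wb G L m \<subseteq> Wb G L n"
  by (induction n rule: dec_induct) auto

lemma Wb_mult: 
  assumes L: "L \<subseteq> carrier G" and a: "a \<in> Wb G L m"
  shows "b \<in> Wb G L n \<Longrightarrow> a \<otimes> b \<in> Wb G L (m + n)"
proof (induction n arbitrary: b)
  case 0
  have "a \<in> carrier G" using a Wb_carrier[OF L] by blast
  then show ?case using 0 a by simp
next
  case (Suc n)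
  from Suc.prems consider "b \<in> Wb G L n" | w x where "w \<in> Wb G L n" "x \<in> L" "b = w \<otimes> x" by auto
  then show ?case
  proof cases
    case 1
    then show ?thesis using Suc.IH by auto
  next
    case 2
    have "a \<in> carrier G" "w \<in> carrier G" "x \<in> carrier G"
      using 2 a L Wb_carrier[OF L, of m] Wb_carrier[OF L, of n] by blast+
    then have "a \<otimes> b = (a \<otimes> w) \<otimes> x" using 2 by (simp add: m_assoc)
    moreover have "a \<otimes> w \<in> Wb G L (m + n)" using Suc.IH 2 by blast
    ultimately show ?thesis using 2 by auto
  qed
qed

lemma labels_carrier: "sch_labels G X \<subseteq> carrier G"
  unfolding sch_labels_def by blast

lemma labels_finite: assumes "finite X" shows "finite (sch_labels G X)"
proof -
  have "sch_labels G X \<subseteq> X \<union> (\<lambda>y. inv y) ` X"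
  proof
    fix x assume x: "x \<in> sch_labels G X"
    then have "x \<in> carrier G" "x \<in> X \<or> inv x \<in> X" unfolding sch_labels_def by auto
    then show "x \<in> X \<union> (\<lambda>y. inv y) ` X" by (metis UnI1 UnI2 image_eqI inv_inv)
  qed
  then show ?thesis using assms finite_subset by blast
qed

lemma Wb_gen:
  assumes gs: "gen_system G X" and g: "g \<in> carrier G"
  shows "\<exists>n. g \<in> Wb G (sch_labels G X) n"
proof -
  let ?L = "sch_labels G X"
  have Xc: "X \<subseteq> carrier G" using gs unfolding gen_system_def by blast
  have "g \<in> generate G X" using gs g unfolding gen_system_def by blast
  then show ?thesis
  proof (induction rule: generate.induct)
    case one
    then show ?case by (metis Wb.simps(1) singletonI)
  next
    case (incl h)
    then have "h \<in> ?L" using Xc unfolding sch_labels_def by blast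
    then have "\<one> \<otimes> h \<in> Wb G ?L 1" by auto
    then show ?case using incl Xc by (metis l_one subsetD)
  next
    case (inv h)
    then have "inv h \<in> ?L" using Xc unfolding sch_labels_def by auto
    then have "\<one> \<otimes> inv h \<in> Wb G ?L 1" by auto
    then show ?case using inv Xc by (metis l_one subsetD inv_closed)
  next
    case (eng h1 h2)
    then obtain m n where "h1 \<in> Wb G ?L m" "h2 \<in> Wb G ?L n" by blast
    then show ?case using Wb_mult[OF labels_carrier] by blast
  qed
qed

lemma Bl_mono: "m \<le> n \<Longrightarrow> Bl G L v m \<subseteq> Bl G L v n"
  by (induction n rule: dec_induct) auto

lemma Bl_desc:
  assumes K: "subgroup K G" and L: "L \<subseteq> carrier G" and g: "g \<in> carrier G"
  shows "Bl G L (K #> g) n = (\<lambda>w. K #> (g \<otimes> w)) ` Wb G L n"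
proof (induction n)
  case 0
  then show ?case using g K subgroup.subset by fastforce
next
  case (Suc n)
  have Kc: "K \<subseteq> carrier G" using K subgroup.subset by blast
  have "(\<Union>u\<in>Bl G L (K #> g) n. (\<lambda>x. u #> x) ` L)
        = (\<lambda>w. K #> (g \<otimes> w)) ` (\<Union>w\<in>Wb G L n. (\<lambda>x. w \<otimes> x) ` L)"
  proof -
    have "K #> (g \<otimes> w) #> x = K #> (g \<otimes> (w \<otimes> x))" if "w \<in> Wb G L n" "x \<in> L" for w x
    proof -
      have wc: "w \<in> carrier G" and xc: "x \<in> carrier G" using that Wb_carrier[OF L] L by blast+
      have "K #> (g \<otimes> w) #> x = K #> (g \<otimes> w \<otimes> x)" using coset_mult_assoc[OF Kc _ xc] g wc by simp
      then show ?thesis using g wc xc by (simp add: m_assoc)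
    qed
    then show ?thesis unfolding Suc by (auto simp: image_iff) 
  qed
  then show ?case unfolding Bl.simps Wb.simps Suc image_Un by simp
qed

end


context group
begin

lemma V_cases: "v \<in> sch_V G K \<Longrightarrow> \<exists>g\<in>carrier G. v = K #> g"
  unfolding sch_V_def RCOSETS_def by blast

lemma V_step:
  assumes K: "subgroup K G" and v: "v \<in> sch_V G K" and x: "x \<in> carrier G"
  shows "v #> x \<in> sch_V G K"
proof -
  obtain g where g: "g \<in> carrier G" "v = K #> g" using V_cases[OF v] by blast
  have Kc: "K \<subseteq> carrier G" using K subgroup.subset by blast
  have "v #> x = K #> (g \<otimes> x)" using g coset_mult_assoc[OF Kc g(1) x] by simp
  then show ?thesis unfolding sch_V_def using g x Kc by (simp add: rcosetsI)
qed

lemma label_inv: "x \<in> sch_labels G X \<Longrightarrow> inv x \<in> sch_labels G X"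
  unfolding sch_labels_def by auto

lemma aut_fwd:
  assumes K: "subgroup K G" and fh: "(f, h) \<in> sch_aut G K X"
    and u: "u \<in> sch_V G K" and x: "x \<in> sch_labels G X"
  shows "\<exists>y\<in>sch_labels G X. f (u #> x) = f u #> y"
proof -
  have xc: "x \<in> carrier G" using x labels_carrier by blast
  have e: "(u, x) \<in> sch_E G K X" unfolding sch_E_def using u x by simp
  have re: "sch_rev G (u, x) \<in> sch_E G K X"
    unfolding sch_E_def sch_rev_def using V_step[OF K u xc] label_inv[OF x] by simp
  have bh: "bij_betw h (sch_E G K X) (sch_E G K X)" using fh unfolding sch_aut_def by simp
  have hE: "h (u, x) \<in> sch_E G K X" using bij_betwE[OF bh] e by blast
  have c: "\<forall>e\<in>sch_E G K X. sch_orig (h e) = f (sch_orig e) \<and> sch_rev G (h e) = h (sch_rev G e)"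
    using fh unfolding sch_aut_def by simp
  have o1: "fst (h (u, x)) = f u" using c e unfolding sch_orig_def by force
  have "sch_rev G (h (u, x)) = h (sch_rev G (u, x))" using c e by blast
  then have "fst (sch_rev G (h (u, x))) = f (u #> x)"
    using c re unfolding sch_orig_def sch_rev_def by force
  then have "f (u #> x) = f u #> snd (h (u, x))" using o1 unfolding sch_rev_def by simp
  moreover have "snd (h (u, x)) \<in> sch_labels G X" using hE unfolding sch_E_def by auto
  ultimately show ?thesis by blast
qed

lemma aut_bwd:
  assumes K: "subgroup K G" and fh: "(f, h) \<in> sch_aut G K X"
    and u: "u \<in> sch_V G K" and y: "y \<in> sch_labels G X"
  shows "\<exists>x\<in>sch_labels G X. f u #> y = f (u #> x)"
proof -
  have bf: "bij_betw f (sch_V G K) (sch_V G K)" using fh unfolding sch_aut_def by simp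
  have bh: "bij_betw h (sch_E G K X) (sch_E G K X)" using fh unfolding sch_aut_def by simp
  have c: "\<forall>e\<in>sch_E G K X. sch_orig (h e) = f (sch_orig e) \<and> sch_rev G (h e) = h (sch_rev G e)"
    using fh unfolding sch_aut_def by simp
  have fu: "f u \<in> sch_V G K" using bij_betwE[OF bf] u by blast
  have "(f u, y) \<in> sch_E G K X" unfolding sch_E_def using fu y by simp
  then obtain e where e: "e \<in> sch_E G K X" "h e = (f u, y)"
    using bij_betw_imp_surj_on[OF bh] by (metis imageE)
  obtain a x where ax: "e = (a, x)" by (cases e)
  have a: "a \<in> sch_V G K" and x: "x \<in> sch_labels G X" using e ax unfolding sch_E_def by auto
  have xc: "x \<in> carrier G" using x labels_carrier by blast
  have "f a = f u" using c e ax unfolding sch_orig_def by force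
  then have au: "a = u" using bij_betw_imp_inj_on[OF bf] a u by (metis inj_onD)
  have re: "sch_rev G e \<in> sch_E G K X"
    unfolding sch_E_def sch_rev_def ax using V_step[OF K a xc] label_inv[OF x] by simp
  have "sch_rev G (h e) = h (sch_rev G e)" using c e by blast
  then have "fst (sch_rev G (h e)) = f (fst (sch_rev G e))"
    using c re unfolding sch_orig_def by force
  then have "f u #> y = f (u #> x)" using e ax au unfolding sch_rev_def by simp
  then show ?thesis using x by blast
qed

lemma Bl_V:
  assumes K: "subgroup K G" and u: "u \<in> sch_V G K"
  shows "Bl G (sch_labels G X) u n \<subseteq> sch_V G K"
proof (induction n)
  case 0
  then show ?case using u by simp
next
  case (Suc n)
  have "v #> x \<in> sch_V G K" if "v \<in> Bl G (sch_labels G X) u n" "x \<in> sch_labels G X" for v x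
    using V_step[OF K] labels_carrier Suc.IH that by blast
  then show ?case using Suc.IH by auto
qed

lemma aut_Bl_fwd:
  assumes K: "subgroup K G" and fh: "(f, h) \<in> sch_aut G K X" and u: "u \<in> sch_V G K"
  shows "f ` Bl G (sch_labels G X) u n \<subseteq> Bl G (sch_labels G X) (f u) n"
proof (induction n)
  case 0
  then show ?case by simp
next
  case (Suc n)
  show ?case
  proof
    fix z assume "z \<in> f ` Bl G (sch_labels G X) u (Suc n)"
    then obtain w where w: "w \<in> Bl G (sch_labels G X) u (Suc n)" "z = f w" by blast
    show "z \<in> Bl G (sch_labels G X) (f u) (Suc n)"
    proof (cases "w \<in> Bl G (sch_labels G X) u n")
      case True
      then show ?thesis using Suc.IH w by auto
    next
      case False
      then obtain v x where vx: "v \<in> Bl G (sch_labels G X) u n" "x \<in> sch_labels G X" "w = v #> x"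
        using w by auto
      have vV: "v \<in> sch_V G K" using Bl_V[OF K u] vx by blast
      obtain y where y: "y \<in> sch_labels G X" "f (v #> x) = f v #> y"
        using aut_fwd[OF K fh vV vx(2)] by blast
      have "f v \<in> Bl G (sch_labels G X) (f u) n" using Suc.IH vx by blast
      then show ?thesis using y w vx by auto
    qed
  qed
qed

lemma aut_Bl_bwd:
  assumes K: "subgroup K G" and fh: "(f, h) \<in> sch_aut G K X" and u: "u \<in> sch_V G K"
  shows "Bl G (sch_labels G X) (f u) n \<subseteq> f ` Bl G (sch_labels G X) u n"
proof (induction n)
  case 0
  then show ?case by simp
next
  case (Suc n)
  show ?case
  proof
    fix z assume z: "z \<in> Bl G (sch_labels G X) (f u) (Suc n)"
    show "z \<in> f ` Bl G (sch_labels G X) u (Suc n)"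
    proof (cases "z \<in> Bl G (sch_labels G X) (f u) n")
      case True
      then show ?thesis using Suc.IH by auto
    next
      case False
      then obtain v y where vy: "v \<in> Bl G (sch_labels G X) (f u) n" "y \<in> sch_labels G X" "z = v #> y"
        using z by auto
      obtain w where w: "w \<in> Bl G (sch_labels G X) u n" "v = f w" using Suc.IH vy by blast
      have wV: "w \<in> sch_V G K" using Bl_V[OF K u] w by blast
      obtain x where x: "x \<in> sch_labels G X" "f w #> y = f (w #> x)"
        using aut_bwd[OF K fh wV vy(2)] by blast
      have "w #> x \<in> Bl G (sch_labels G X) u (Suc n)" using w x by auto
      then show ?thesis using x vy w by auto
    qed
  qed
qed

end


lemma (in group) tm_graph:
  assumes tm: "tarski_monster G p" and K: "subgroup K G" "K \<noteq> {\<one>}" "K \<noteq> carrier G"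
    and finX: "finite X" and gs: "gen_system G X"
  shows "\<forall>v\<in>sch_V G K. finite (sch_orbit G K X v)" "\<not> sch_almost_transitive G K X"
proof -
  note tb = tm_basic[OF tm]
  define L where "L = sch_labels G X"
  define V where "V = sch_V G K"
  have Lc: "L \<subseteq> carrier G" unfolding L_def by (rule labels_carrier)
  have finL: "finite L" unfolding L_def by (rule labels_finite[OF finX])
  have Kc: "K \<subseteq> carrier G" using K(1) subgroup.subset by blast
  have finK: "finite K" "card K = p" using tb(4)[OF K] by auto
  have one_K: "\<one> \<in> K" using K(1) subgroup.one_closed by blast
  obtain k where k: "k \<in> K" "k \<noteq> \<one>" using K(2) one_K by blast
  have kc: "k \<in> carrier G" using k Kc by blast
  obtain r where r: "k \<in> Wb G L r" using Wb_gen[OF gs kc] unfolding L_def by blast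
  define N where "N = card (Wb G L r)"
  define S where "S = {v \<in> V. card (Bl G L v r) < N}"
  have finW: "\<And>n. finite (Wb G L n)" using Wb_finite[OF finL] .
  have WC: "\<And>n. Wb G L n \<subseteq> carrier G" using Wb_carrier[OF Lc] .
  have Bl_fin: "finite (Bl G L v n)" if vin: "v \<in> V" for v n
  proof -
    obtain g where g: "g \<in> carrier G" "v = K #> g" using V_cases[OF vin[unfolded V_def]] by blast
    show ?thesis using Bl_desc[OF K(1) Lc g(1)] g finW by simp
  qed
  have KV: "K \<in> V" unfolding V_def sch_V_def using rcosetsI[OF Kc one_closed] Kc by simp
  have KS: "K \<in> S"
  proof -
    have "Bl G L K r = (\<lambda>w. K #> (\<one> \<otimes> w)) ` Wb G L r"
      using Bl_desc[OF K(1) Lc one_closed] Kc by simp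
    moreover have "\<not> inj_on (\<lambda>w. K #> (\<one> \<otimes> w)) (Wb G L r)"
    proof
      assume inj: "inj_on (\<lambda>w. K #> (\<one> \<otimes> w)) (Wb G L r)"
      have 1: "\<one> \<in> Wb G L r" using Wb_mono[of 0 r L] by auto
      have "K #> (\<one> \<otimes> \<one>) = K #> (\<one> \<otimes> k)"
        using coset_join2[OF one_closed K(1) one_K] coset_join2[OF kc K(1) k(1)] kc by simp
      then have "\<one> = k" using inj_onD[OF inj _ 1 r] by blast
      then show False using k by simp
    qed
    ultimately have "card (Bl G L K r) \<noteq> N" unfolding N_def using inj_on_iff_eq_card finW by metis
    moreover have "card (Bl G L K r) \<le> N" unfolding N_def \<open>Bl G L K r = _\<close>
      by (rule card_image_le[OF finW])
    ultimately show ?thesis unfolding S_def using KV by simp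
  qed
  define C where "C = (\<lambda>(a,b). a \<otimes> inv b) ` {(a,b). a \<in> Wb G L r \<and> b \<in> Wb G L r \<and> a \<noteq> b}"
  define T where "T = (\<lambda>c. {v \<in> V. \<exists>g\<in>carrier G. v = K #> g \<and> g \<otimes> c \<otimes> inv g \<in> K})"
  have finC: "finite C"
  proof -
    have sub: "{(a,b). a \<in> Wb G L r \<and> b \<in> Wb G L r \<and> a \<noteq> b} \<subseteq> Wb G L r \<times> Wb G L r" by blast
    show ?thesis unfolding C_def
      by (intro finite_imageI finite_subset[OF sub] finite_cartesian_product finW)
  qed
  have finT: "finite (T c)" if c: "c \<in> C" for c
  proof -
    from c obtain q where q: "q \<in> {(a,b). a \<in> Wb G L r \<and> b \<in> Wb G L r \<and> a \<noteq> b}"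
      "c = (\<lambda>(a,b). a \<otimes> inv b) q" unfolding C_def by (rule imageE)
    obtain a b where "q = (a, b)" by (cases q)
    then have ab: "a \<in> Wb G L r" "b \<in> Wb G L r" "a \<noteq> b" "c = a \<otimes> inv b" using q by auto
    have abc: "a \<in> carrier G" "b \<in> carrier G" using ab WC by blast+
    have cc: "c \<in> carrier G" using abc ab by simp
    have c1: "c \<noteq> \<one>"
    proof
      assume "c = \<one>"
      then have "a \<otimes> inv b \<otimes> b = b" using abc ab(4) by simp
      then show False using abc ab(3) by (simp add: m_assoc)
    qed
    show ?thesis
    proof (rule subsingleton_finite)
      fix x y assume xy: "x \<in> T c" "y \<in> T c"
      have "\<exists>g\<in>carrier G. x = K #> g \<and> g \<otimes> c \<otimes> inv g \<in> K" using xy(1) by (simp add: T_def)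
      then obtain g1 where g1: "g1 \<in> carrier G" "x = K #> g1" "g1 \<otimes> c \<otimes> inv g1 \<in> K" by auto
      have "\<exists>g\<in>carrier G. y = K #> g \<and> g \<otimes> c \<otimes> inv g \<in> K" using xy(2) by (simp add: T_def)
      then obtain g2 where g2: "g2 \<in> carrier G" "y = K #> g2" "g2 \<otimes> c \<otimes> inv g2 \<in> K" by auto
      show "x = y" unfolding g1(2) g2(2) by (rule tm_unique[OF tm K g1(1) g2(1) cc c1 g1(3) g2(3)])
    qed
  qed
  have SsubT: "S \<subseteq> (\<Union>c\<in>C. T c)"
  proof
    fix v assume v: "v \<in> S"
    then have vV: "v \<in> V" unfolding S_def by blast
    obtain g where g: "g \<in> carrier G" "v = K #> g" using V_cases[OF vV[unfolded V_def]] by blast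
    have d: "Bl G L v r = (\<lambda>w. K #> (g \<otimes> w)) ` Wb G L r" using Bl_desc[OF K(1) Lc g(1)] g by simp
    have lt: "card ((\<lambda>w. K #> (g \<otimes> w)) ` Wb G L r) < card (Wb G L r)"
      using v d unfolding S_def N_def by simp
    have "\<not> inj_on (\<lambda>w. K #> (g \<otimes> w)) (Wb G L r)"
    proof
      assume "inj_on (\<lambda>w. K #> (g \<otimes> w)) (Wb G L r)"
      then have "card ((\<lambda>w. K #> (g \<otimes> w)) ` Wb G L r) = card (Wb G L r)" by (rule card_image)
      then show False using lt by simp
    qed
    then obtain a b where ab: "a \<in> Wb G L r" "b \<in> Wb G L r" "a \<noteq> b" "K #> (g \<otimes> a) = K #> (g \<otimes> b)"
      unfolding inj_on_def by blast
    have abc: "a \<in> carrier G" "b \<in> carrier G" using ab WC by blast+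
    have "g \<otimes> a \<in> K #> (g \<otimes> b)" using rcos_self[OF _ K(1), of "g \<otimes> a"] ab(4) abc g by simp
    then have "(g \<otimes> a) \<otimes> inv (g \<otimes> b) \<in> K"
      using subgroup.rcos_module_imp[OF K(1) is_group] abc g by simp
    moreover have "(g \<otimes> a) \<otimes> inv (g \<otimes> b) = g \<otimes> (a \<otimes> inv b) \<otimes> inv g"
      using abc g by (simp add: m_assoc inv_mult_group)
    ultimately have "v \<in> T (a \<otimes> inv b)" unfolding T_def using vV g by auto
    moreover have "a \<otimes> inv b \<in> C" unfolding C_def using ab by auto
    ultimately show "v \<in> (\<Union>c\<in>C. T c)" by blast
  qed
  have finS: "finite S" using SsubT finC finT finite_subset by (meson finite_UN_I)
  have SV: "S \<subseteq> V" unfolding S_def by blast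
  have conn: "\<exists>d. v \<in> Bl G L K d" if vin: "v \<in> V" for v
  proof -
    obtain g where g: "g \<in> carrier G" "v = K #> g" using V_cases[OF vin[unfolded V_def]] by blast
    obtain d where "g \<in> Wb G L d" using Wb_gen[OF gs g(1)] unfolding L_def by blast
    moreover have "Bl G L K d = (\<lambda>w. K #> (\<one> \<otimes> w)) ` Wb G L d"
      using Bl_desc[OF K(1) Lc one_closed] Kc by simp
    ultimately have "K #> (\<one> \<otimes> g) \<in> Bl G L K d" by simp
    then show ?thesis using g by auto
  qed
  have Vinf: "infinite V"
  proof
    assume fV: "finite V"
    have "\<Union>V = carrier G" unfolding V_def sch_V_def by (rule rcosets_part_G[OF K(1)])
    moreover have "finite v" if vin: "v \<in> V" for v
    proof -
      obtain g where g: "g \<in> carrier G" "v = K #> g" using V_cases[OF vin[unfolded V_def]] by blast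
      have "v = (\<lambda>x. x \<otimes> g) ` K" unfolding g r_coset_def by auto
      then show ?thesis using finK by simp
    qed
    ultimately have "finite (carrier G)" using fV by (metis finite_Union)
    then show False using tb(2) by simp
  qed
  have autS: "f ` S = S" if fh: "(f, h) \<in> sch_aut G K X" for f h
  proof -
    have bf: "bij_betw f V V" using fh unfolding sch_aut_def V_def by simp
    have sub: "f ` S \<subseteq> S"
    proof
      fix z assume "z \<in> f ` S"
      then obtain s where s: "s \<in> S" "z = f s" by blast
      have sV: "s \<in> V" using s SV by blast
      have fsV: "f s \<in> V" using bij_betwE[OF bf] sV by blast
      have "card (Bl G L (f s) r) \<le> card (f ` Bl G L s r)"
        using aut_Bl_bwd[OF K(1) fh, of s r] sV Bl_fin[OF sV] unfolding V_def L_def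
        by (simp add: card_mono)
      also have "\<dots> \<le> card (Bl G L s r)" by (rule card_image_le[OF Bl_fin[OF sV]])
      also have "\<dots> < N" using s unfolding S_def by simp
      finally show "z \<in> S" unfolding S_def using s fsV by simp
    qed
    have "inj_on f S" using bij_betw_imp_inj_on[OF bf] SV inj_on_subset by blast
    then have "card (f ` S) = card S" by (rule card_image)
    then show ?thesis using card_subset_eq[OF finS sub] by simp
  qed
  show "\<forall>v\<in>sch_V G K. finite (sch_orbit G K X v)"
  proof
    fix v assume "v \<in> sch_V G K"
    then have vV: "v \<in> V" unfolding V_def .
    obtain d where d: "v \<in> Bl G L K d" using conn[OF vV] by blast
    have "sch_orbit G K X v \<subseteq> (\<Union>s\<in>S. Bl G L s d)"
    proof
      fix z assume "z \<in> sch_orbit G K X v"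
      then obtain f h where fh: "(f, h) \<in> sch_aut G K X" "z = f v" unfolding sch_orbit_def by blast
      have "z \<in> Bl G L (f K) d" using aut_Bl_fwd[OF K(1) fh(1), of K d] KV d fh(2)
        unfolding V_def L_def by blast
      moreover have "f K \<in> S" using autS[OF fh(1)] KS by blast
      ultimately show "z \<in> (\<Union>s\<in>S. Bl G L s d)" by blast
    qed
    moreover have "finite (\<Union>s\<in>S. Bl G L s d)" using finS Bl_fin SV by blast
    ultimately show "finite (sch_orbit G K X v)" using finite_subset by blast
  qed
  show "\<not> sch_almost_transitive G K X"
  proof
    assume "sch_almost_transitive G K X"
    then obtain V0 where V0: "finite V0" "V0 \<subseteq> V"
      "\<forall>v\<in>V. \<exists>(f, h)\<in>sch_aut G K X. f v \<in> V0"
      unfolding sch_almost_transitive_def V_def by blast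
    have "\<forall>w\<in>V0. \<exists>d. w \<in> Bl G L K d" using conn V0(2) by blast
    then obtain dd where dd: "\<forall>w\<in>V0. w \<in> Bl G L K (dd w)" by metis
    define D where "D = Max (insert 0 (dd ` V0))"
    have V0D: "w \<in> Bl G L K D" if "w \<in> V0" for w
    proof -
      have "dd w \<le> D" unfolding D_def using V0(1) that by simp
      then show ?thesis using Bl_mono dd that by blast
    qed
    have "V \<subseteq> (\<Union>t\<in>S. Bl G L t D)"
    proof
      fix v assume vV: "v \<in> V"
      then obtain f h where fh: "(f, h) \<in> sch_aut G K X" "f v \<in> V0" using V0(3) by blast
      have bf: "bij_betw f V V" using fh unfolding sch_aut_def V_def by simp
      obtain t where t: "t \<in> S" "K = f t" using autS[OF fh(1)] KS by (metis imageE)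
      have tV: "t \<in> V" using t SV by blast
      have "f v \<in> Bl G L (f t) D" using V0D fh(2) t by simp
      then have "f v \<in> f ` Bl G L t D" using aut_Bl_bwd[OF K(1) fh(1), of t D] tV
        unfolding V_def L_def by blast
      then obtain u where u: "u \<in> Bl G L t D" "f v = f u" by blast
      have "u \<in> V" using Bl_V[OF K(1), of t X D] tV u unfolding V_def L_def by blast
      then have "v = u" using bij_betw_imp_inj_on[OF bf] vV u(2) by (metis inj_onD)
      then show "v \<in> (\<Union>t\<in>S. Bl G L t D)" using u t by blast
    qed
    moreover have "finite (\<Union>t\<in>S. Bl G L t D)" using finS Bl_fin SV by blast
    ultimately show False using Vinf finite_subset by blast
  qed
qed



lemma (in group) V_sub: "v \<in> sch_V G K \<Longrightarrow> subgroup K G \<Longrightarrow> v \<subseteq> carrier G"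
  using V_cases[of v K] r_coset_subset_G subgroup.subset by blast

lemma (in group) tm_lab:
  assumes tm: "tarski_monster G p" and K: "subgroup K G" "K \<noteq> {\<one>}" "K \<noteq> carrier G"
    and gs: "gen_system G X" and fhl: "(f, h) \<in> sch_aut_lab G K X"
  shows "(\<forall>v\<in>sch_V G K. f v = v) \<and> (\<forall>e\<in>sch_E G K X. h e = e)"
proof -
  define L where "L = sch_labels G X"
  define V where "V = sch_V G K"
  have Kc: "K \<subseteq> carrier G" using K(1) subgroup.subset by blast
  have fh: "(f, h) \<in> sch_aut G K X" using fhl unfolding sch_aut_lab_def by blast
  have lab: "\<forall>e\<in>sch_E G K X. sch_label (h e) = sch_label e" using fhl unfolding sch_aut_lab_def by blast
  have bf: "bij_betw f V V" using fh unfolding sch_aut_def V_def by simp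
  have c: "\<forall>e\<in>sch_E G K X. sch_orig (h e) = f (sch_orig e) \<and> sch_rev G (h e) = h (sch_rev G e)"
    using fh unfolding sch_aut_def by simp
  have hform: "h (u, x) = (f u, x)" if "(u, x) \<in> sch_E G K X" for u x
  proof -
    have "fst (h (u, x)) = f u" using c that unfolding sch_orig_def by force
    moreover have "snd (h (u, x)) = x" using lab that unfolding sch_label_def by force
    ultimately show ?thesis by (metis prod.collapse)
  qed
  have step: "f (u #> x) = f u #> x" if u: "u \<in> V" and x: "x \<in> L" for u x
  proof -
    have xc: "x \<in> carrier G" using x labels_carrier unfolding L_def by blast
    have e: "(u, x) \<in> sch_E G K X" unfolding sch_E_def using u x unfolding V_def L_def by simp
    have re: "(u #> x, inv x) \<in> sch_E G K X"
      unfolding sch_E_def using V_step[OF K(1) u[unfolded V_def] xc] label_inv x unfolding L_def by simp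
    have "sch_rev G (h (u, x)) = h (sch_rev G (u, x))" using c e by blast
    then have "sch_rev G (f u, x) = h (u #> x, inv x)" using hform[OF e] unfolding sch_rev_def by simp
    also have "\<dots> = (f (u #> x), inv x)" by (rule hform[OF re])
    finally show ?thesis unfolding sch_rev_def by simp
  qed
  have wstep: "f (u #> w) = f u #> w" if u: "u \<in> V" and w: "w \<in> Wb G L n" for u w n
    using w
  proof (induction n arbitrary: w)
    case 0
    then have "w = \<one>" by simp
    moreover have "u \<subseteq> carrier G" using V_sub u K(1) unfolding V_def by blast
    moreover have "f u \<subseteq> carrier G" using V_sub bij_betwE[OF bf] u K(1) unfolding V_def by blast
    ultimately show ?case by simp
  next
    case (Suc n)
    show ?case
    proof (cases "w \<in> Wb G L n")
      case True
      then show ?thesis using Suc.IH by blast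
    next
      case False
      then obtain w' x where wx: "w' \<in> Wb G L n" "x \<in> L" "w = w' \<otimes> x" using Suc.prems by auto
      have w'c: "w' \<in> carrier G" and xc: "x \<in> carrier G"
        using wx Wb_carrier[OF labels_carrier, of X n] labels_carrier unfolding L_def by blast+
      have uc: "u \<subseteq> carrier G" using V_sub u K(1) unfolding V_def by blast
      have fuc: "f u \<subseteq> carrier G" using V_sub bij_betwE[OF bf] u K(1) unfolding V_def by blast
      have uw: "u #> w' \<in> V" using V_step[OF K(1) u[unfolded V_def] w'c] unfolding V_def .
      have "f (u #> w) = f ((u #> w') #> x)" using coset_mult_assoc[OF uc w'c xc] wx(3) by simp
      also have "\<dots> = f (u #> w') #> x" using step[OF uw wx(2)] .
      also have "\<dots> = (f u #> w') #> x" using Suc.IH[OF wx(1)] by simp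
      also have "\<dots> = f u #> w" using coset_mult_assoc[OF fuc w'c xc] wx(3) by simp
      finally show ?thesis .
    qed
  qed
  have gstep: "f (u #> g) = f u #> g" if u: "u \<in> V" and g: "g \<in> carrier G" for u g
  proof -
    obtain n where "g \<in> Wb G L n" using Wb_gen[OF gs g] unfolding L_def by blast
    then show ?thesis using wstep[OF u] by blast
  qed
  have KV: "K \<in> V" unfolding V_def sch_V_def using rcosetsI[OF Kc one_closed] Kc by simp
  have "f K \<in> V" using bij_betwE[OF bf] KV by blast
  then obtain t where t: "t \<in> carrier G" "f K = K #> t" using V_cases unfolding V_def by blast
  have "t \<otimes> k \<otimes> inv t \<in> K" if k: "k \<in> K" for k
  proof -
    have kc: "k \<in> carrier G" using k Kc by blast
    have "K #> k = K" by (rule coset_join2[OF kc K(1) k])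
    then have "f K = f K #> k" using gstep[OF KV kc] by simp
    then have eq: "K #> t = K #> (t \<otimes> k)" using t coset_mult_assoc[OF Kc t(1) kc] by simp
    have "t \<otimes> k \<in> K #> t" unfolding eq using rcos_self[OF _ K(1)] t kc by simp
    then show ?thesis using subgroup.rcos_module_imp[OF K(1) is_group t(1)] by simp
  qed
  then have "t \<in> K" using tm_self_norm[OF tm K t(1)] by blast
  then have fK: "f K = K" using t coset_join2[OF t(1) K(1)] by simp
  have fv: "\<forall>v\<in>sch_V G K. f v = v"
  proof
    fix v assume v: "v \<in> sch_V G K"
    obtain g where g: "g \<in> carrier G" "v = K #> g" using V_cases[OF v] by blast
    show "f v = v" using gstep[OF KV g(1)] fK g by simp
  qed
  moreover have "\<forall>e\<in>sch_E G K X. h e = e"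
  proof
    fix e assume e: "e \<in> sch_E G K X"
    obtain u x where ux: "e = (u, x)" by (cases e)
    have "u \<in> sch_V G K" using e ux unfolding sch_E_def by auto
    then show "h e = e" using hform e ux fv by simp
  qed
  ultimately show ?thesis by blast
qed



lemma vt_imp_at:
  assumes "group G" "subgroup H G" "sch_vertex_transitive G H X"
  shows "sch_almost_transitive G H X"
proof -
  have HV: "H \<in> sch_V G H"
    unfolding sch_V_def using group.rcosetsI[OF assms(1) subgroup.subset[OF assms(2)] monoid.one_closed[OF group.is_monoid[OF assms(1)]]]
      group.coset_mult_one[OF assms(1) subgroup.subset[OF assms(2)]] by simp
  have "\<forall>v\<in>sch_V G H. \<exists>(f, h)\<in>sch_aut G H X. f v \<in> {H}"
  proof
    fix v assume "v \<in> sch_V G H"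
    then obtain f h where "(f, h) \<in> sch_aut G H X" "f v = H"
      using assms(3) HV unfolding sch_vertex_transitive_def by blast
    then show "\<exists>(f, h)\<in>sch_aut G H X. f v \<in> {H}" by blast
  qed
  then show ?thesis unfolding sch_almost_transitive_def using HV by (intro exI[of _ "{H}"]) auto
qed

theorem proposition6p8:
  fixes G :: "('a, 'b) monoid_scheme" and p :: nat and X K :: "'a set"
  assumes "tarski_monster G p"
    and "finite X" and "gen_system G X"
    and "subgroup K G" and "K \<noteq> {\<one>\<^bsub>G\<^esub>}" and "K \<noteq> carrier G"
  shows "(\<forall>(f, h)\<in>sch_aut_lab G K X.
            (\<forall>v\<in>sch_V G K. f v = v) \<and> (\<forall>e\<in>sch_E G K X. h e = e))
       \<and> (\<forall>v\<in>sch_V G K. finite (sch_orbit G K X v))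
       \<and> \<not> sch_almost_transitive G K X
       \<and> strongly_simple G"
proof -
  have grp: "group G" using tm_basic(1)[OF assms(1)] .
  have 1: "\<forall>(f, h)\<in>sch_aut_lab G K X.
            (\<forall>v\<in>sch_V G K. f v = v) \<and> (\<forall>e\<in>sch_E G K X. h e = e)"
    using group.tm_lab[OF grp assms(1) assms(4-6) assms(3)] by blast
  have 2: "\<forall>v\<in>sch_V G K. finite (sch_orbit G K X v)" "\<not> sch_almost_transitive G K X"
    using group.tm_graph[OF grp assms(1) assms(4-6) assms(2) assms(3)] by auto
  have 3: "strongly_simple G"
    unfolding strongly_simple_def
  proof (intro conjI allI impI)
    show "fin_generated G" unfolding fin_generated_def using assms(2,3) by blast
  next
    fix Y H assume a: "finite Y \<and> gen_system G Y \<and> card Y \<le> group_rank G + 1 \<and>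
        subgroup H G \<and> H \<noteq> {\<one>\<^bsub>G\<^esub>} \<and> H \<noteq> carrier G"
    then have "\<not> sch_almost_transitive G H Y"
      using group.tm_graph(2)[OF grp assms(1)] by blast
    then show "\<not> sch_vertex_transitive G H Y" using vt_imp_at[OF grp] a by blast
  qed
  show ?thesis using 1 2 3 by blast
qed


end
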